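(* For all positive integers $n$ and $k$ with $k\le 2^n$, we have $v_2\big(s(2^n+1,k+1)\big)=v_2\big(s(2^n,k)\big)$.
   Context: The (unsigned) Stirling numbers of the first kind $s(n,k)$ are defined by $x(x+1)\cdots(x+n-1)=\sum_{k=0}^n s(n,k)x^k$, with $s(n,k)=0$ for $k>n$. $v_2$ denotes the $2$-adic valuation. *)

theory Defs
  imports "HOL-Combinatorics.Stirling" "HOL-Computational_Algebra.Primes"
begin

end

theory Submission
  imports Defs "HOL-Computational_Algebra.Polynomial"
begin

definition P :: "(nat \<Rightarrow> int) \<Rightarrow> nat \<Rightarrow> int poly" where
  "P c m = (\<Prod>i<m. [:1, c i:])"

lemma P_0 [simp]: "P c 0 = 1" by (simp add: P_def)
lemma P_Suc: "P c (Suc m) = P c m * [:1, c m:]" by (simp add: P_def)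

lemma coeff_mult_lin_Suc: "coeff ((p::int poly) * [:1, c:]) (Suc t) = coeff p (Suc t) + c * coeff p t"
  by (simp add: mult_pCons_right)
lemma coeff_mult_lin_0: "coeff ((p::int poly) * [:1, c:]) 0 = coeff p 0"
  by (simp add: mult_pCons_right)

lemma coeff_P_0 [simp]: "coeff (P c m) 0 = 1"
  by (induction m) (simp_all add: P_Suc coeff_mult_lin_0)

lemma coeff_P_Suc: "coeff (P c (Suc m)) (Suc t) = coeff (P c m) (Suc t) + c m * coeff (P c m) t"
  by (simp add: P_Suc coeff_mult_lin_Suc)

lemma coeff_P_high: "m < t \<Longrightarrow> coeff (P c m) t = 0"
proof (induction m arbitrary: t)
  case 0 then show ?case by (cases t) auto
next
  case (Suc m) then obtain t' where "t = Suc t'" by (cases t) auto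
  with Suc show ?case by (simp add: coeff_P_Suc)
qed

lemma coeff_P_top: "coeff (P c m) m = (\<Prod>i<m. c i)"
  by (induction m) (simp_all add: coeff_P_Suc coeff_P_high)

lemma coeff_P_scale: "coeff (P (\<lambda>i. z * c i) m) t = z ^ t * coeff (P c m) t"
proof (induction m arbitrary: t)
  case 0 then show ?case by (cases t) auto
next
  case (Suc m) then show ?case by (cases t) (simp_all add: coeff_P_Suc algebra_simps)
qed

lemma P_double: "P c (2*m) = P (\<lambda>i. c (2*i)) m * P (\<lambda>i. c (2*i+1)) m"
proof (induction m)
  case (Suc m)
  have e: "2 * Suc m = Suc (Suc (2*m))" by simp
  have "P c (2 * Suc m) = P c (2*m) * [:1, c (2*m):] * [:1, c (2*m+1):]"
    unfolding e P_Suc by (simp only: Suc_eq_plus1)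
  also have "\<dots> = (P (\<lambda>i. c (2*i)) m * [:1, c (2*m):]) * (P (\<lambda>i. c (2*i+1)) m * [:1, c (2*m+1):])"
    unfolding Suc.IH by (simp only: mult_ac)
  finally show ?case by (simp only: P_Suc)
qed simp

abbreviation G :: "nat \<Rightarrow> int poly" where "G m \<equiv> P (\<lambda>i. int i) m"

lemma G_stirling: "r \<le> N \<Longrightarrow> coeff (G N) r = int (stirling N (N - r))"
proof (induction N arbitrary: r)
  case 0 then show ?case by simp
next
  case (Suc N)
  show ?case
  proof (cases r)
    case 0 then show ?thesis by simp
  next
    case (Suc t)
    show ?thesis
    proof (cases "t = N")
      case True
      have "int N * int (stirling N 0) = 0" by (cases N) auto
      with True Suc show ?thesis by (simp add: coeff_P_Suc coeff_P_high Suc.IH)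
    next
      case False
      with Suc Suc.prems have tN: "t < N" by simp
      have e: "Suc N - r = Suc (N - Suc t)" using tN Suc by simp
      have e2: "N - t = Suc (N - Suc t)" using tN by simp
      show ?thesis using tN Suc
        by (simp add: coeff_P_Suc Suc.IH e e2)
    qed
  qed
qed

lemma stirling_pos: "0 < k \<Longrightarrow> k \<le> n \<Longrightarrow> 0 < stirling n k"
proof (induction n arbitrary: k)
  case 0 then show ?case by simp
next
  case (Suc n)
  then obtain k' where k: "k = Suc k'" by (cases k) auto
  show ?case
  proof (cases k')
    case 0 then show ?thesis using k by (simp del: stirling.simps add: stirling_Suc_n_1)
  next
    case (Suc k'')
    then show ?thesis using k Suc.prems Suc.IH[of k'] by simp
  qed
qed

lemma G_pos: "r < N \<Longrightarrow> coeff (G N) r > 0"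
  using G_stirling[of r N] stirling_pos[of "N - r" N] by simp

definition v :: "int \<Rightarrow> nat" where "v x = multiplicity 2 x"

lemma two_not_unit: "\<not> is_unit (2::int)" by simp

lemma v_dvd: "2 ^ v x dvd x"
  unfolding v_def by (rule multiplicity_dvd)

lemma v_ge: "x \<noteq> 0 \<Longrightarrow> 2 ^ e dvd x \<Longrightarrow> e \<le> v x"
  unfolding v_def by (rule multiplicity_geI) auto

lemma v_not_dvd: "x \<noteq> 0 \<Longrightarrow> \<not> 2 ^ Suc (v x) dvd x"
  using v_ge[of x "Suc (v x)"] by auto

lemma v_eqI: "2 ^ e dvd x \<Longrightarrow> \<not> 2 ^ Suc e dvd x \<Longrightarrow> v x = e"
  unfolding v_def by (rule multiplicity_eqI)

lemma dvd_le_v: "x \<noteq> 0 \<Longrightarrow> e \<le> v x \<Longrightarrow> 2 ^ e dvd x"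
  using v_dvd[of x] by (meson dvd_trans le_imp_power_dvd)

lemma v_add:
  assumes "x \<noteq> 0" "2 ^ Suc (v x) dvd y"
  shows "v (x + y) = v x"
proof (rule v_eqI)
  have "2 ^ v x dvd y" using assms(2) by (meson dvd_trans le_imp_power_dvd le_SucI order_refl)
  then show "2 ^ v x dvd x + y" using v_dvd[of x] by simp
  show "\<not> 2 ^ Suc (v x) dvd x + y"
  proof
    assume "2 ^ Suc (v x) dvd x + y"
    then have "2 ^ Suc (v x) dvd (x + y) - y" using assms(2) by (rule dvd_diff)
    then show False using v_not_dvd[OF assms(1)] by simp
  qed
qed

lemma v_add_ne: "x \<noteq> 0 \<Longrightarrow> 2 ^ Suc (v x) dvd y \<Longrightarrow> x + y \<noteq> 0"
proof
  assume a: "x \<noteq> 0" "2 ^ Suc (v x) dvd y" "x + y = 0"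
  then have "x = - y" by simp
  then have "2 ^ Suc (v x) dvd x" using a(2) by simp
  then show False using v_not_dvd[OF a(1)] by simp
qed

lemma v_mult: "x \<noteq> 0 \<Longrightarrow> y \<noteq> 0 \<Longrightarrow> v (x * y) = v x + v y"
  unfolding v_def by (rule prime_elem_multiplicity_mult_distrib) auto

lemma v_pow2: "v (2 ^ k) = k"
  unfolding v_def by (simp add: multiplicity_same_power)

lemma v_odd: "odd x \<Longrightarrow> v x = 0"
  by (rule v_eqI) auto

lemma v_one [simp]: "v 1 = 0" by (simp add: v_def)

lemma v_uminus [simp]: "v (- x) = v x"
proof (cases "x = 0")
  case False
  show ?thesis by (rule v_eqI) (use v_dvd[of x] v_not_dvd[OF False] in auto)
qed simp

lemma pow_v_le: "0 < u \<Longrightarrow> 2 ^ v (int u) \<le> u"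
proof -
  assume "0 < u"
  have "2 ^ v (int u) dvd int u" by (rule v_dvd)
  then have "(2::nat) ^ v (int u) dvd u" by (metis of_nat_dvd_iff of_nat_numeral of_nat_power)
  then show ?thesis using \<open>0 < u\<close> by (rule dvd_imp_le)
qed

lemma v_lt: "0 < u \<Longrightarrow> u < 2 ^ k \<Longrightarrow> v (int u) < k"
proof -
  assume a: "0 < u" "u < 2 ^ k"
  have "(2::nat) ^ v (int u) < 2 ^ k" using pow_v_le[OF a(1)] a(2) by linarith
  then show ?thesis using power_less_imp_less_exp by fastforce
qed

lemma v_lt_self: "0 < u \<Longrightarrow> v (int u) < u"
  using v_lt[of u u] by (simp add: less_exp)

lemma v_nat_mult: "0 < a \<Longrightarrow> 0 < b \<Longrightarrow> v (int (a * b)) = v (int a) + v (int b)"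
  by (simp add: v_mult)

lemma v_two_pow_minus:
  assumes "0 < x" "x < 2 ^ j"
  shows "v (int (2 ^ j - x)) = v (int x)"
proof -
  define a where "a = v (int x)"
  have "2 ^ a dvd int x" unfolding a_def by (rule v_dvd)
  then obtain w where o: "int x = 2 ^ a * w" by (auto elim: dvdE)
  have "odd w"
  proof
    assume "even w"
    then have "2 ^ Suc a dvd int x" using o by auto
    then show False using v_not_dvd[of "int x"] assms a_def by simp
  qed
  have "a < j" unfolding a_def using v_lt assms by blast
  have "int (2 ^ j - x) = 2 ^ j - int x" using assms by (simp add: of_nat_diff)
  also have "\<dots> = 2 ^ a * (2 ^ (j - a) - w)"
    using o \<open>a < j\<close> by (simp add: algebra_simps flip: power_add)
  finally have e: "int (2 ^ j - x) = 2 ^ a * (2 ^ (j - a) - w)" .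
  have "odd (2 ^ (j - a) - w)" using \<open>odd w\<close> \<open>a < j\<close> by simp
  then have "2 ^ (j - a) - w \<noteq> 0" by auto
  then have "v (int (2 ^ j - x)) = a + v (2 ^ (j - a) - w)"
    unfolding e by (simp add: v_mult v_pow2)
  then show ?thesis using v_odd[OF \<open>odd (2 ^ (j - a) - w)\<close>] a_def by simp
qed

lemma v_zero_odd: "x \<noteq> 0 \<Longrightarrow> v x = 0 \<Longrightarrow> odd x"
  using v_ge[of x 1] by auto

lemma binom_odd: "w < 2 ^ j \<Longrightarrow> odd (int ((2 ^ j - 1) choose w))"
proof (induction w)
  case 0 then show ?case by simp
next
  case (Suc w)
  define m :: nat where "m = 2 ^ j - 1"
  have ih: "odd (int (m choose w))" using Suc m_def by simp
  have id: "Suc w * (m choose Suc w) = (m - w) * (m choose w)"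
    using binomial_absorption[of w m] binomial_absorb_comp[of m w] by simp
  have mw: "m - w = 2 ^ j - Suc w" unfolding m_def by simp
  have pos1: "0 < (m choose Suc w)" using Suc.prems unfolding m_def by simp
  have pos2: "0 < (m choose w)" using Suc.prems unfolding m_def by simp
  have e1: "v (int (Suc w * (m choose Suc w))) = v (int (Suc w)) + v (int (m choose Suc w))"
    using pos1 by (intro v_nat_mult) auto
  have e2: "v (int ((m - w) * (m choose w))) = v (int (m - w)) + v (int (m choose w))"
    using pos2 Suc.prems mw by (intro v_nat_mult) auto
  have e3: "v (int (m - w)) = v (int (Suc w))"
    unfolding mw using Suc.prems by (intro v_two_pow_minus) auto
  have e4: "v (int (m choose w)) = 0" using ih by (simp add: v_odd)
  have e5: "v (int (Suc w * (m choose Suc w))) = v (int ((m - w) * (m choose w)))"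
    by (simp only: id)
  have "v (int (m choose Suc w)) = 0" using e1 e2 e3 e4 e5 by linarith
  then show ?case using v_zero_odd[of "int (m choose Suc w)"] pos1 m_def by simp
qed

lemma binom_v:
  assumes "0 < u" "u \<le> 2 ^ j"
  shows "v (int (2 ^ j choose u)) + v (int u) = j"
proof -
  have id: "u * (2 ^ j choose u) = 2 ^ j * ((2 ^ j - 1) choose (u - 1))"
    using times_binomial_minus1_eq[of u "2^j"] assms by simp
  have o: "odd (int ((2 ^ j - 1) choose (u - 1)))" using assms by (intro binom_odd) auto
  have pos: "0 < (2 ^ j choose u)" using assms by simp
  have e1: "v (int (u * (2 ^ j choose u))) = v (int u) + v (int (2 ^ j choose u))"
    using assms pos by (intro v_nat_mult) auto
  have e3: "v (int (u * (2 ^ j choose u))) = v (int (2 ^ j * ((2 ^ j - 1) choose (u - 1))))"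
    by (simp only: id)
  have ule: "u - 1 \<le> 2 ^ j - 1" using assms by linarith
  have "v (int (2 ^ j * ((2 ^ j - 1) choose (u - 1)))) = j"
  proof -
    have "int (2 ^ j * ((2 ^ j - 1) choose (u - 1))) = 2 ^ j * int ((2 ^ j - 1) choose (u - 1))" by simp
    moreover have "int ((2 ^ j - 1) choose (u - 1)) \<noteq> 0" using ule by (simp add: not_less)
    ultimately show ?thesis using o ule by (simp add: v_mult v_pow2 v_odd)
  qed
  then show ?thesis using e1 e3 by linarith
qed

abbreviation Q :: "nat \<Rightarrow> int poly" where "Q h \<equiv> [:1, 0, -1:] ^ h"

lemma coeff_mult_Q1_0: "coeff ((p::int poly) * [:1,0,-1:]) 0 = coeff p 0"
  by (simp add: mult_pCons_right)
lemma coeff_mult_Q1_1: "coeff ((p::int poly) * [:1,0,-1:]) (Suc 0) = coeff p (Suc 0)"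
  by (simp add: mult_pCons_right)
lemma coeff_mult_Q1_SS: "coeff ((p::int poly) * [:1,0,-1:]) (Suc (Suc t)) = coeff p (Suc (Suc t)) - coeff p t"
  by (simp add: mult_pCons_right)

lemma coeff_Q: "coeff (Q h) t = (if even t then (-1) ^ (t div 2) * int (h choose (t div 2)) else 0)"
proof (induction h arbitrary: t)
  case 0 then show ?case by (cases t) (auto simp: coeff_1)
next
  case (Suc h)
  have QS: "Q (Suc h) = Q h * [:1,0,-1:]" by (simp add: mult.commute)
  show ?case
  proof (cases t)
    case 0 then show ?thesis unfolding QS by (simp add: coeff_mult_Q1_0 Suc.IH)
  next
    case (Suc t1)
    show ?thesis
    proof (cases t1)
      case 0 then show ?thesis using Suc unfolding QS by (simp add: coeff_mult_Q1_1 Suc.IH)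
    next
      case (Suc t')
      note t = \<open>t = Suc t1\<close> this
      show ?thesis
      proof (cases "even t'")
        case True
        then obtain w where w: "t' = 2 * w" by auto
        have "coeff (Q (Suc h)) t = (-1) ^ Suc w * int (h choose Suc w) - (-1) ^ w * int (h choose w)"
          unfolding QS t w by (simp add: coeff_mult_Q1_SS Suc.IH)
        also have "\<dots> = (-1) ^ Suc w * int (Suc h choose Suc w)" by (simp add: algebra_simps)
        finally show ?thesis using t w by simp
      next
        case False
        then show ?thesis unfolding QS t by (simp add: coeff_mult_Q1_SS Suc.IH)
      qed
    qed
  qed
qed

lemma coeff_Q_odd: "odd t \<Longrightarrow> coeff (Q h) t = 0" by (simp add: coeff_Q)

definition pdvd :: "int \<Rightarrow> int poly \<Rightarrow> bool" where "pdvd m p \<longleftrightarrow> (\<forall>t. m dvd coeff p t)"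

lemma pdvd_add: "pdvd m p \<Longrightarrow> pdvd m q \<Longrightarrow> pdvd m (p + q)"
  by (simp add: pdvd_def)
lemma pdvd_diff: "pdvd m p \<Longrightarrow> pdvd m q \<Longrightarrow> pdvd m (p - q)"
  by (simp add: pdvd_def)
lemma pdvd_smult: "pdvd m (smult m p)"
  by (simp add: pdvd_def)
lemma pdvd_trans: "pdvd m p \<Longrightarrow> k dvd m \<Longrightarrow> pdvd k p"
  by (auto simp: pdvd_def intro: dvd_trans)
lemma pdvd_mult_both: "pdvd a p \<Longrightarrow> pdvd b q \<Longrightarrow> pdvd (a * b) (p * q)"
  unfolding pdvd_def coeff_mult by (auto intro!: dvd_sum mult_dvd_mono)
lemma pdvd_mult_right: "pdvd a p \<Longrightarrow> pdvd a (p * q)"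
  using pdvd_mult_both[of a p 1 q] by (simp add: pdvd_def)
lemma pdvd_mult_left: "pdvd a q \<Longrightarrow> pdvd a (p * q)"
  using pdvd_mult_right[of a q p] by (simp add: mult.commute)

lemma pdvd_prod_diff:
  assumes "finite S" "\<And>j. j \<in> S \<Longrightarrow> pdvd m (f j - g j)"
  shows "pdvd m (prod f S - prod g S)"
  using assms
proof (induction S rule: finite_induct)
  case empty then show ?case by (simp add: pdvd_def)
next
  case (insert x F)
  have "prod f (insert x F) - prod g (insert x F) = (f x - g x) * prod f F + g x * (prod f F - prod g F)"
    using insert by (simp add: algebra_simps)
  moreover have "pdvd m ((f x - g x) * prod f F)" using insert by (intro pdvd_mult_right) auto
  moreover have "pdvd m (g x * (prod f F - prod g F))" using insert by (intro pdvd_mult_left) auto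
  ultimately show ?case by (simp add: pdvd_add)
qed

definition A :: "nat \<Rightarrow> int poly" where "A m = P (\<lambda>i. 2 * int i + 1) m"
definition Am :: "nat \<Rightarrow> int poly" where "Am m = P (\<lambda>i. - (2 * int i + 1)) m"

lemma coeff_Am: "coeff (Am m) t = (-1) ^ t * coeff (A m) t"
proof -
  have "(\<lambda>i. - (2 * int i + 1)) = (\<lambda>i. (-1) * (2 * int i + 1))" by simp
  then show ?thesis unfolding Am_def A_def by (simp only: coeff_P_scale)
qed

lemma P_add: "P c (a + b) = P c a * P (\<lambda>i. c (a + i)) b"
proof (induction b)
  case (Suc b)
  have "P c (a + Suc b) = P c (a + b) * [:1, c (a + b):]" by (simp only: add_Suc_right P_Suc)
  also have "\<dots> = P c a * (P (\<lambda>i. c (a + i)) b * [:1, c (a + b):])" by (simp only: Suc.IH mult.assoc)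
  finally show ?case by (simp only: P_Suc)
qed simp

lemma P_rev: "P c m = P (\<lambda>i. c (m - Suc i)) m"
  unfolding P_def by (rule prod.nat_diff_reindex[symmetric])

lemma A_cong: "pdvd (2 ^ (k + 2)) (A (2 ^ (k + 1)) - Q (2 ^ k))"
proof (induction k)
  case 0
  have "A (2 ^ 1) - Q (2 ^ 0) = smult 4 [:0, 1, 1:]"
    by (simp add: A_def numeral_2_eq_2 P_Suc)
  then show ?case using pdvd_smult[of 4 "[:0,1,1:]"] by simp
next
  case (Suc k)
  define M :: nat where "M = 2 ^ (k + 1)"
  define f where "f = (\<lambda>i::nat. [:1, 2 * int i + 1:])"
  define g where "g = (\<lambda>i::nat. [:1, 2 * int (M + (M - Suc i)) + 1:])"
  define h where "h = (\<lambda>i::nat. [:1, - (2 * int i + 1):])"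
  have M2: "2 ^ (Suc k + 1) = M + M" unfolding M_def by simp
  have "A (M + M) = A M * P (\<lambda>i. 2 * int (M + i) + 1) M"
    unfolding A_def by (simp only: P_add)
  also have "P (\<lambda>i. 2 * int (M + i) + 1) M = P (\<lambda>i. 2 * int (M + (M - Suc i)) + 1) M"
    by (rule P_rev)
  finally have "A (M + M) = prod f {..<M} * prod g {..<M}"
    unfolding A_def P_def f_def g_def by simp
  then have AMM: "A (M + M) = (\<Prod>i<M. f i * g i)" by (simp add: prod.distrib)
  have AAm: "A M * Am M = (\<Prod>i<M. f i * h i)"
    unfolding A_def Am_def P_def f_def h_def by (simp only: prod.distrib)
  have step1: "pdvd (2 ^ (Suc k + 2)) (A (M + M) - A M * Am M)"
    unfolding AMM AAm
  proof (rule pdvd_prod_diff)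
    fix i assume "i \<in> {..<M}"
    then have iM: "i < M" by simp
    have "g i - h i = smult (2 ^ (Suc k + 2)) [:0, 1:]"
    proof -
      have "int (M + (M - Suc i)) = 2 * int M - 1 - int i" using iM by simp
      then have "2 * int (M + (M - Suc i)) + 1 + (2 * int i + 1) = 4 * int M" by simp
      moreover have "4 * int M = 2 ^ (Suc k + 2)" unfolding M_def by simp
      ultimately show ?thesis unfolding g_def h_def by simp
    qed
    then have "f i * g i - f i * h i = f i * smult (2 ^ (Suc k + 2)) [:0, 1:]"
      by (simp add: right_diff_distrib[symmetric])
    moreover have "pdvd (2 ^ (Suc k + 2)) (f i * smult (2 ^ (Suc k + 2)) [:0, 1:])"
      by (rule pdvd_mult_left) (rule pdvd_smult)
    ultimately show "pdvd (2 ^ (Suc k + 2)) (f i * g i - f i * h i)"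
      by (simp only:)
  qed simp
  define D1 where "D1 = A M - Q (2 ^ k)"
  define D2 where "D2 = Am M - Q (2 ^ k)"
  have pD1: "pdvd (2 ^ (k + 2)) D1" using Suc.IH unfolding D1_def M_def .
  have cD2: "coeff D2 t = (-1) ^ t * coeff D1 t" for t
  proof (cases "even t")
    case True then show ?thesis unfolding D1_def D2_def by (simp add: coeff_Am)
  next
    case False then show ?thesis unfolding D1_def D2_def by (simp add: coeff_Am coeff_Q_odd)
  qed
  have pD2: "pdvd (2 ^ (k + 2)) D2"
    using pD1 unfolding pdvd_def cD2 by simp
  have pD12: "pdvd (2 ^ (Suc k + 2)) (D1 + D2)"
    unfolding pdvd_def
  proof
    fix t
    show "2 ^ (Suc k + 2) dvd coeff (D1 + D2) t"
    proof (cases "even t")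
      case True
      then have "coeff (D1 + D2) t = 2 * coeff D1 t" by (simp add: cD2)
      moreover have "2 ^ (k + 2) dvd coeff D1 t" using pD1 by (simp add: pdvd_def)
      then have "2 * 2 ^ (k + 2) dvd 2 * coeff D1 t" by (rule mult_dvd_mono[OF dvd_refl])
      ultimately show ?thesis by simp
    next
      case False
      then show ?thesis by (simp add: cD2)
    qed
  qed
  have QQ: "Q (2 ^ Suc k) = Q (2 ^ k) * Q (2 ^ k)" by (simp add: power_add[symmetric] mult_2)
  have id2: "A M * Am M - Q (2 ^ Suc k) = D1 * D2 + Q (2 ^ k) * (D1 + D2)"
    unfolding QQ D1_def D2_def by (simp add: algebra_simps)
  have "pdvd (2 ^ (k + 2) * 2 ^ (k + 2)) (D1 * D2)" using pD1 pD2 by (rule pdvd_mult_both)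
  then have p1: "pdvd (2 ^ (Suc k + 2)) (D1 * D2)"
  proof (rule pdvd_trans)
    have "(2::int) ^ (Suc k + 2) dvd 2 ^ ((k + 2) + (k + 2))" by (rule le_imp_power_dvd) simp
    then show "(2::int) ^ (Suc k + 2) dvd 2 ^ (k + 2) * 2 ^ (k + 2)" by (simp only: power_add)
  qed
  have p2: "pdvd (2 ^ (Suc k + 2)) (Q (2 ^ k) * (D1 + D2))" using pD12 by (rule pdvd_mult_left)
  have "A (2 ^ (Suc k + 1)) - Q (2 ^ Suc k) = (A (M + M) - A M * Am M) + (A M * Am M - Q (2 ^ Suc k))"
    unfolding M2 by simp
  moreover have "pdvd (2 ^ (Suc k + 2)) (A M * Am M - Q (2 ^ Suc k))"
    unfolding id2 using p1 p2 by (rule pdvd_add)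
  ultimately show ?case using step1 by (simp only: pdvd_add)
qed

lemma HP:
  fixes a b :: "'a::comm_ring_1"
  shows "(\<Prod>i<m. a + of_int (c i) * b) = (\<Sum>t\<le>m. of_int (coeff (P c m) t) * a ^ (m - t) * b ^ t)"
proof (induction m)
  case 0 then show ?case by simp
next
  case (Suc m)
  define e where "e = (\<lambda>t. of_int (coeff (P c m) t) :: 'a)"
  have eS0: "of_int (coeff (P c (Suc m)) 0) = e 0" by (simp add: e_def)
  have eSS: "of_int (coeff (P c (Suc m)) (Suc t)) = e (Suc t) + of_int (c m) * e t" for t
    by (simp add: e_def coeff_P_Suc)
  have eh: "e (Suc m) = 0" by (simp add: e_def coeff_P_high)
  have e0: "e 0 = 1" by (simp add: e_def)
  have "(\<Prod>i<Suc m. a + of_int (c i) * b) = (\<Sum>t\<le>m. e t * a ^ (m - t) * b ^ t) * (a + of_int (c m) * b)"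
    using Suc by (simp add: e_def)
  also have "\<dots> = a * (\<Sum>t\<le>m. e t * a ^ (m - t) * b ^ t) + of_int (c m) * b * (\<Sum>t\<le>m. e t * a ^ (m - t) * b ^ t)"
    by (simp add: algebra_simps)
  also have "a * (\<Sum>t\<le>m. e t * a ^ (m - t) * b ^ t) = (\<Sum>t\<le>m. e t * a ^ (Suc m - t) * b ^ t)"
    unfolding sum_distrib_left by (rule sum.cong) (auto simp: Suc_diff_le)
  also have "of_int (c m) * b * (\<Sum>t\<le>m. e t * a ^ (m - t) * b ^ t) = (\<Sum>t\<le>m. of_int (c m) * e t * a ^ (m - t) * b ^ Suc t)"
    unfolding sum_distrib_left by (rule sum.cong) (auto simp: algebra_simps)
  also have "(\<Sum>t\<le>m. e t * a ^ (Suc m - t) * b ^ t) = (\<Sum>t\<le>Suc m. e t * a ^ (Suc m - t) * b ^ t)"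
    by (simp add: eh)
  also have "\<dots> = e 0 * a ^ Suc m + (\<Sum>t\<le>m. e (Suc t) * a ^ (m - t) * b ^ Suc t)"
    by (subst sum.atMost_Suc_shift) simp
  finally have L: "(\<Prod>i<Suc m. a + of_int (c i) * b) = e 0 * a ^ Suc m + (\<Sum>t\<le>m. (e (Suc t) + of_int (c m) * e t) * a ^ (m - t) * b ^ Suc t)"
    by (simp add: sum.distrib algebra_simps e0)
  have "(\<Sum>t\<le>Suc m. of_int (coeff (P c (Suc m)) t) * a ^ (Suc m - t) * b ^ t)
     = e 0 * a ^ Suc m + (\<Sum>t\<le>m. (e (Suc t) + of_int (c m) * e t) * a ^ (m - t) * b ^ Suc t)"
    by (subst sum.atMost_Suc_shift) (simp add: eS0 eSS e0)
  with L show ?case by simp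
qed

lemma coeff_lin_pow: "coeff ([:1, z:] ^ n) i = of_nat (n choose i) * (z::int) ^ i"
proof (cases "i \<le> n")
  case True then show ?thesis by (simp add: coeff_linear_poly_power)
next
  case False
  have "degree ([:1, z:] ^ n) \<le> degree [:1,z:] * n" by (rule degree_power_le)
  moreover have "degree [:1,z:] \<le> 1" by (cases "z = 0") auto
  ultimately have "degree ([:1, z:] ^ n) \<le> n" by (metis le_trans mult_le_mono1 mult_1)
  then show ?thesis using False by (simp add: coeff_eq_0)
qed

lemma monom_pow: "(monom (1::int) 1) ^ t = monom 1 t"
  by (induction t) (simp_all add: mult_monom)

lemma monom_pow': "(monom (1::int) (Suc 0)) ^ t = monom 1 t"
  using monom_pow by simp

lemma refl_prod:
  "(\<Prod>i<N. [:1, - int N:] + [:int i:] * monom 1 1) = [:1, - int N:] * P (\<lambda>i. - int i) N"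
proof -
  have "(\<Prod>i<N. [:1, - int N:] + [:int i:] * monom 1 1) = (\<Prod>i<N. [:1, int i - int N:])"
    by (intro prod.cong) (simp_all add: monom_altdef)
  also have "\<dots> = (\<Prod>i<N. [:1, int (N - Suc i) - int N:])"
    by (rule prod.nat_diff_reindex[symmetric])
  also have "\<dots> = (\<Prod>i<N. [:1, - int (Suc i):])"
    by (intro prod.cong) (simp_all add: of_nat_diff)
  also have "\<dots> = [:1, - int N:] * P (\<lambda>i. - int i) N"
  proof -
    have "(\<Prod>i<Suc N. [:1, - int i:]) = (\<Prod>i<N. [:1, - int (Suc i):])"
      by (subst prod.lessThan_Suc_shift) simp
    moreover have "(\<Prod>i<Suc N. [:1, - int i:]) = (\<Prod>i<N. [:1, - int i:]) * [:1, - int N:]" by simp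
    ultimately show ?thesis unfolding P_def by (simp add: mult.commute)
  qed
  finally show ?thesis .
qed

lemma refl_coeff:
  fixes N r' :: nat
  defines "e \<equiv> (\<lambda>t. coeff (G N) t)"
  shows "(-1) ^ Suc r' * e (Suc r') - int N * (-1) ^ r' * e r' =
    (\<Sum>t\<le>N. e t * (if Suc r' < t then 0 else int (N - t choose (Suc r' - t)) * (- int N) ^ (Suc r' - t)))"
proof -
  have H: "(\<Prod>i<N. [:1, - int N:] + of_int (int i) * monom 1 1) =
     (\<Sum>t\<le>N. of_int (e t) * [:1, - int N:] ^ (N - t) * (monom 1 1) ^ t)"
    unfolding e_def by (rule HP)
  have "(\<Prod>i<N. [:1, - int N:] + of_int (int i) * monom 1 1) = [:1, - int N:] * P (\<lambda>i. - int i) N"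
    using refl_prod[of N] by (simp add: of_int_poly)
  with H have H2: "[:1, - int N:] * P (\<lambda>i. - int i) N = (\<Sum>t\<le>N. [:e t:] * ([:1, - int N:] ^ (N - t) * monom 1 t))"
    by (simp add: monom_pow monom_pow' of_int_poly mult.assoc)
  have cP: "coeff (P (\<lambda>i. - int i) N) t = (-1) ^ t * e t" for t
  proof -
    have "(\<lambda>i. - int i) = (\<lambda>i. (-1) * int i)" by simp
    then show ?thesis unfolding e_def by (simp only: coeff_P_scale)
  qed
  have C1: "coeff ([:1, - int N:] * P (\<lambda>i. - int i) N) (Suc r') =
      (-1) ^ Suc r' * e (Suc r') - int N * (-1) ^ r' * e r'"
    by (simp add: mult.commute[of "[:1, - int N:]"] coeff_mult_lin_Suc cP)
  moreover have C2: "coeff (\<Sum>t\<le>N. [:e t:] * ([:1, - int N:] ^ (N - t) * monom 1 t)) (Suc r') =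
     (\<Sum>t\<le>N. e t * (if Suc r' < t then 0 else int (N - t choose (Suc r' - t)) * (- int N) ^ (Suc r' - t)))"
    unfolding coeff_sum
  proof (rule sum.cong)
    fix t assume "t \<in> {..N}"
    have "coeff ([:e t:] * ([:1, - int N:] ^ (N - t) * monom 1 t)) (Suc r') =
        e t * coeff (monom 1 t * [:1, - int N:] ^ (N - t)) (Suc r')"
      by (simp add: mult.commute)
    also have "\<dots> = e t * (if Suc r' < t then 0 else int (N - t choose (Suc r' - t)) * (- int N) ^ (Suc r' - t))"
      by (simp only: coeff_monom_mult coeff_lin_pow) simp
    finally show "coeff ([:e t:] * ([:1, - int N:] ^ (N - t) * monom 1 t)) (Suc r') =
        e t * (if Suc r' < t then 0 else int (N - t choose (Suc r' - t)) * (- int N) ^ (Suc r' - t))" .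
  qed simp
  ultimately show ?thesis using H2 by metis
qed

lemma refl_odd:
  fixes N r' :: nat
  defines "e \<equiv> (\<lambda>t. coeff (G N) t)"
  assumes "even r'" "Suc r' < N"
  shows "2 * e (Suc r') = int N * (int N - int r' - 1) * e r'
     - (\<Sum>t<r'. e t * int (N - t choose (Suc r' - t)) * (- int N) ^ (Suc r' - t))"
proof -
  define X where "X = (\<lambda>t. e t * (int (N - t choose (Suc r' - t)) * (- int N) ^ (Suc r' - t)))"
  have R: "(-1) ^ Suc r' * e (Suc r') - int N * (-1) ^ r' * e r' =
    (\<Sum>t\<le>N. e t * (if Suc r' < t then 0 else int (N - t choose (Suc r' - t)) * (- int N) ^ (Suc r' - t)))"
    unfolding e_def by (rule refl_coeff)
  have "(\<Sum>t\<le>N. e t * (if Suc r' < t then 0 else int (N - t choose (Suc r' - t)) * (- int N) ^ (Suc r' - t)))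
      = (\<Sum>t\<le>Suc r'. X t)"
  proof -
    have "(\<Sum>t\<le>N. e t * (if Suc r' < t then 0 else int (N - t choose (Suc r' - t)) * (- int N) ^ (Suc r' - t)))
        = (\<Sum>t\<in>{..Suc r'}. e t * (if Suc r' < t then 0 else int (N - t choose (Suc r' - t)) * (- int N) ^ (Suc r' - t)))"
      using assms(3) by (intro sum.mono_neutral_right) auto
    also have "\<dots> = (\<Sum>t\<le>Suc r'. X t)" unfolding X_def by (intro sum.cong) auto
    finally show ?thesis .
  qed
  also have "\<dots> = X (Suc r') + X r' + (\<Sum>t<r'. X t)"
    by (simp add: lessThan_Suc_atMost[symmetric])
  also have "X (Suc r') = e (Suc r')" by (simp add: X_def)
  also have "X r' = - int N * int (N - r') * e r'" by (simp add: X_def)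
  finally have R2: "(-1) ^ Suc r' * e (Suc r') - int N * (-1) ^ r' * e r' =
      e (Suc r') + - int N * int (N - r') * e r' + (\<Sum>t<r'. X t)" using R by simp
  have "int (N - r') = int N - int r'" using assms(3) by simp
  with R2 assms(2) have "- e (Suc r') - int N * e r' = e (Suc r') - int N * (int N - int r') * e r' + (\<Sum>t<r'. X t)"
    by simp
  then have "2 * e (Suc r') = int N * (int N - int r' - 1) * e r' - (\<Sum>t<r'. X t)"
    by (simp add: algebra_simps)
  then show ?thesis unfolding X_def by (simp add: mult.assoc)
qed

lemma pow_dvd_mono: "a \<le> b \<Longrightarrow> (2::int) ^ b dvd x \<Longrightarrow> 2 ^ a dvd x"
  by (meson dvd_trans le_imp_power_dvd)

lemma pow_dvd_mult3: "(2::int) ^ a dvd x \<Longrightarrow> 2 ^ b dvd y \<Longrightarrow> 2 ^ (c + a + b) dvd 2 ^ c * x * y"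
  by (simp add: mult_dvd_mono power_add mult.assoc)

lemma G_high: "1 \<le> m \<Longrightarrow> m \<le> s \<Longrightarrow> coeff (G m) s = 0"
proof -
  assume a: "1 \<le> m" "m \<le> s"
  show ?thesis
  proof (cases "s = m")
    case True
    have "(\<Prod>i<m. int i) = 0" using a by (intro prod_zero) auto
    then show ?thesis using True by (simp add: coeff_P_top)
  next
    case False then show ?thesis using a by (simp add: coeff_P_high)
  qed
qed

lemma conv: "coeff (G (2 * m)) r = (\<Sum>s\<le>r. 2 ^ s * coeff (G m) s * coeff (A m) (r - s))"
proof -
  have e1: "(\<lambda>i. int (2 * i)) = (\<lambda>i. 2 * int i)" by simp
  have e2: "(\<lambda>i. int (2 * i + 1)) = (\<lambda>i. 2 * int i + 1)" by (simp add: add.commute)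
  have "G (2 * m) = P (\<lambda>i. 2 * int i) m * A m"
    unfolding A_def P_double e1 e2 ..
  then show ?thesis
    by (simp add: coeff_mult coeff_P_scale mult.assoc)
qed

lemma A_high: "m < t \<Longrightarrow> coeff (A m) t = 0"
  unfolding A_def by (rule coeff_P_high)

lemma A_top: "odd (coeff (A m) m)"
  unfolding A_def coeff_P_top by (induction m) auto

lemma A_even: "2 ^ (k + 2) dvd coeff (A (2 ^ (k + 1))) (2 * u) - (-1) ^ u * int (2 ^ k choose u)"
proof -
  have "2 ^ (k + 2) dvd coeff (A (2 ^ (k + 1)) - Q (2 ^ k)) (2 * u)"
    using A_cong[of k] by (simp add: pdvd_def)
  then show ?thesis by (simp add: coeff_Q)
qed

lemma A_odd: "odd t \<Longrightarrow> 2 ^ (k + 2) dvd coeff (A (2 ^ (k + 1))) t"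
proof -
  assume "odd t"
  have "2 ^ (k + 2) dvd coeff (A (2 ^ (k + 1)) - Q (2 ^ k)) t"
    using A_cong[of k] by (simp add: pdvd_def)
  then show ?thesis using \<open>odd t\<close> by (simp add: coeff_Q_odd)
qed

lemma A_low:
  assumes "1 \<le> u" "u \<le> 2 ^ k"
  shows "2 ^ (k - v (int u)) dvd coeff (A (2 ^ (k + 1))) (2 * u)"
proof -
  define C where "C = int (2 ^ k choose u)"
  have bv: "v C + v (int u) = k" unfolding C_def using assms by (intro binom_v) auto
  have "2 ^ v C dvd C" by (rule v_dvd)
  then have "2 ^ (k - v (int u)) dvd C" using bv by (metis add_diff_cancel_right')
  then have c1: "2 ^ (k - v (int u)) dvd (-1) ^ u * C" by (rule dvd_mult)
  have c2: "2 ^ (k - v (int u)) dvd coeff (A (2 ^ (k + 1))) (2 * u) - (-1) ^ u * C"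
    using A_even[of k u] unfolding C_def by (rule pow_dvd_mono[rotated]) simp
  have "coeff (A (2 ^ (k + 1))) (2 * u) = (coeff (A (2 ^ (k + 1))) (2 * u) - (-1) ^ u * C) + (-1) ^ u * C"
    by simp
  then show ?thesis using c1 c2 by (metis dvd_add)
qed

definition d :: "nat \<Rightarrow> nat \<Rightarrow> int" where "d n r = coeff (G (2 ^ n)) r"

lemma d_ne: "r < 2 ^ n \<Longrightarrow> d n r \<noteq> 0"
  unfolding d_def using G_pos by (metis less_irrefl)

lemma d_0 [simp]: "d n 0 = 1" by (simp add: d_def)

lemma d_conv: "d (Suc n) r = (\<Sum>s\<le>r. 2 ^ s * d n s * coeff (A (2 ^ n)) (r - s))"
  unfolding d_def using conv[of "2 ^ n" r] by simp

lemma sum_rest_dvd: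
  assumes "x \<in> S" "finite S" "\<And>s. s \<in> S \<Longrightarrow> s \<noteq> x \<Longrightarrow> (m::int) dvd f s"
  shows "m dvd (\<Sum>s\<in>S. f s) - f x"
proof -
  have "(\<Sum>s\<in>S. f s) = f x + (\<Sum>s\<in>S - {x}. f s)" using assms by (simp add: sum.remove)
  moreover have "m dvd (\<Sum>s\<in>S - {x}. f s)" using assms by (intro dvd_sum) auto
  ultimately show ?thesis by simp
qed

lemma k_lt_pow: "k < (2::nat) ^ k" by (rule less_exp)

lemma E_step:
  assumes k1: "1 \<le> k"
    and IH: "\<And>u. 1 \<le> u \<Longrightarrow> u \<le> 2 ^ (k - 1) \<Longrightarrow> 2 ^ (k - 1 - v (int u)) dvd d (k + 1) (2 * u)"
    and u: "1 \<le> u" "u \<le> 2 ^ k"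
  shows "2 ^ (k - v (int u)) dvd d (k + 2) (2 * u) \<and> \<not> 2 ^ (k + 1) dvd d (k + 2) (2 * u)"
proof -
  define M :: nat where "M = 2 ^ (k + 1)"
  define a where "a = (\<lambda>t. coeff (A M) t)"
  define T where "T = (\<lambda>s. 2 ^ s * d (k + 1) s * a (2 * u - s))"
  have cv: "d (k + 2) (2 * u) = (\<Sum>s\<le>2 * u. T s)"
    unfolding T_def a_def M_def using d_conv[of "k + 1" "2 * u"] by simp
  have T0: "T 0 = a (2 * u)" by (simp add: T_def)
  have k2: "(2::nat) ^ k = 2 * 2 ^ (k - 1)" using k1 by (cases k) auto
  have rest: "2 ^ (k + 1) dvd T s" if s: "s \<le> 2 * u" "s \<noteq> 0" for s
  proof (cases "odd s")
    case True
    then have "odd (2 * u - s)" using s by auto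
    then have "2 ^ (k + 2) dvd a (2 * u - s)" unfolding a_def M_def by (rule A_odd)
    then have "2 ^ (k + 1) dvd a (2 * u - s)" by (rule pow_dvd_mono[rotated]) simp
    then show ?thesis unfolding T_def by simp
  next
    case False
    then obtain \<sigma> where \<sigma>: "s = 2 * \<sigma>" by auto
    have \<sigma>1: "1 \<le> \<sigma>" "\<sigma> \<le> u" using s \<sigma> by auto
    show ?thesis
    proof (cases "\<sigma> = u")
      case True
      have Ts: "T s = 2 ^ (2 * u) * d (k + 1) (2 * u)"
        using True \<sigma> by (simp add: T_def a_def A_def)
      show ?thesis
      proof (cases "u \<le> 2 ^ (k - 1)")
        case True
        have h1: "2 ^ (k - 1 - v (int u)) dvd d (k + 1) (2 * u)" using IH u(1) True by blast
        have vu1: "v (int u) < u" using u by (intro v_lt_self) auto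
        have vu2: "v (int u) < k" using u k1 k2 True by (intro v_lt) auto
        have "2 ^ (2 * u + (k - 1 - v (int u))) dvd T s"
          unfolding Ts power_add by (rule mult_dvd_mono[OF dvd_refl h1])
        moreover have "k + 1 \<le> 2 * u + (k - 1 - v (int u))" using vu1 vu2 by linarith
        ultimately show ?thesis by (rule pow_dvd_mono[rotated])
      next
        case False
        then have "k + 1 \<le> 2 * u" using k2 k_lt_pow[of k] by linarith
        then have "(2::int) ^ (k + 1) dvd 2 ^ (2 * u)" by (rule le_imp_power_dvd)
        then show ?thesis unfolding Ts by simp
      qed
    next
      case False
      define w where "w = u - \<sigma>"
      have w1: "1 \<le> w" "w \<le> 2 ^ k" "w < 2 ^ k" using False \<sigma>1 u unfolding w_def by auto
      have aw: "2 ^ (k - v (int w)) dvd a (2 * u - s)"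
      proof -
        have "2 * u - s = 2 * w" unfolding w_def \<sigma> by simp
        then show ?thesis unfolding a_def M_def using A_low[OF w1(1) w1(2)] by simp
      qed
      have vw: "v (int w) < k" using w1 by (intro v_lt) auto
      show ?thesis
      proof (cases "\<sigma> \<le> 2 ^ (k - 1)")
        case True
        have h1: "2 ^ (k - 1 - v (int \<sigma>)) dvd d (k + 1) s" using IH \<sigma>1(1) True \<sigma> by blast
        have vs1: "v (int \<sigma>) < \<sigma>" using \<sigma>1 by (intro v_lt_self) auto
        have vs2: "v (int \<sigma>) < k" using \<sigma>1 k1 k2 True by (intro v_lt) auto
        have "2 ^ (s + (k - 1 - v (int \<sigma>)) + (k - v (int w))) dvd T s"
          unfolding T_def by (rule pow_dvd_mult3[OF h1 aw])
        moreover have "k + 1 \<le> s + (k - 1 - v (int \<sigma>)) + (k - v (int w))"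
          using vs1 vs2 vw \<sigma> by linarith
        ultimately show ?thesis by (rule pow_dvd_mono[rotated])
      next
        case False
        have h1: "2 ^ 0 dvd d (k + 1) s" by simp
        have "2 ^ (s + 0 + (k - v (int w))) dvd T s"
          unfolding T_def by (rule pow_dvd_mult3[OF h1 aw])
        moreover have "k + 1 \<le> s + 0 + (k - v (int w))"
          using False k2 k_lt_pow[of k] vw \<sigma> by linarith
        ultimately show ?thesis by (rule pow_dvd_mono[rotated])
      qed
    qed
  qed
  have D1: "2 ^ (k + 1) dvd d (k + 2) (2 * u) - a (2 * u)"
  proof -
    have sr: "(\<Sum>s\<le>2 * u. T s) = T 0 + (\<Sum>s\<in>{..2 * u} - {0}. T s)"
      by (rule sum.remove) auto
    have "2 ^ (k + 1) dvd (\<Sum>s\<in>{..2 * u} - {0}. T s)"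
    proof (rule dvd_sum)
      fix s assume "s \<in> {..2 * u} - {0}"
      then have "s \<le> 2 * u" "s \<noteq> 0" by auto
      then show "2 ^ (k + 1) dvd T s" by (rule rest)
    qed
    then show ?thesis unfolding cv sr T0 by simp
  qed
  define C where "C = int (2 ^ k choose u)"
  have D2: "2 ^ (k + 2) dvd a (2 * u) - (-1) ^ u * C"
    unfolding a_def M_def C_def by (rule A_even)
  have D: "2 ^ (k + 1) dvd d (k + 2) (2 * u) - (-1) ^ u * C"
  proof -
    have "2 ^ (k + 1) dvd a (2 * u) - (-1) ^ u * C" using D2 by (rule pow_dvd_mono[rotated]) simp
    with D1 have "2 ^ (k + 1) dvd (d (k + 2) (2 * u) - a (2 * u)) + (a (2 * u) - (-1) ^ u * C)"
      by (rule dvd_add)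
    then show ?thesis by simp
  qed
  have bv: "v C + v (int u) = k" unfolding C_def using u by (intro binom_v) auto
  have Cne: "C \<noteq> 0" unfolding C_def using u by simp
  show ?thesis
  proof
    have "2 ^ v C dvd C" by (rule v_dvd)
    then have "2 ^ (k - v (int u)) dvd C" using bv by (metis add_diff_cancel_right')
    then have c1: "2 ^ (k - v (int u)) dvd (-1) ^ u * C" by (rule dvd_mult)
    have c2: "2 ^ (k - v (int u)) dvd d (k + 2) (2 * u) - (-1) ^ u * C"
      using D by (rule pow_dvd_mono[rotated]) simp
    have "d (k + 2) (2 * u) = (d (k + 2) (2 * u) - (-1) ^ u * C) + (-1) ^ u * C" by simp
    then show "2 ^ (k - v (int u)) dvd d (k + 2) (2 * u)" using c1 c2 by (metis dvd_add)
  next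
    show "\<not> 2 ^ (k + 1) dvd d (k + 2) (2 * u)"
    proof
      assume "2 ^ (k + 1) dvd d (k + 2) (2 * u)"
      then have "2 ^ (k + 1) dvd d (k + 2) (2 * u) - (d (k + 2) (2 * u) - (-1) ^ u * C)"
        using D by (rule dvd_diff)
      then have "2 ^ (k + 1) dvd (-1) ^ u * C" by simp
      then have "2 ^ (k + 1) dvd C" by (cases "even u") auto
      then have "k + 1 \<le> v C" using Cne by (intro v_ge) auto
      then show False using bv by linarith
    qed
  qed
qed

lemma chain:
  assumes "\<And>i. t < i \<Longrightarrow> i \<le> j \<Longrightarrow> (f::nat\<Rightarrow>nat) i < n + f (i - 1)" "t < j"
  shows "f j + 1 \<le> (j - t) * n + f t"
  using assms
proof (induction j)
  case 0 then show ?case by simp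
next
  case (Suc j)
  have s: "f (Suc j) < n + f j" using Suc.prems(1)[of "Suc j"] Suc.prems(2) by simp
  show ?case
  proof (cases "t = j")
    case True then show ?thesis using s by simp
  next
    case False
    then have tj: "t < j" using Suc.prems(2) by simp
    have ih: "f j + 1 \<le> (j - t) * n + f t" using Suc.IH Suc.prems(1) tj by simp
    have "(Suc j - t) * n = n + (j - t) * n" using tj by (simp add: Suc_diff_le)
    then show ?thesis using ih s by linarith
  qed
qed

lemma T_step:
  assumes k1: "1 \<le> k"
    and I1: "\<And>r s. even r \<Longrightarrow> even s \<Longrightarrow> r < s \<Longrightarrow> s < 2 ^ (k + 1) \<Longrightarrow> v (d (k + 1) r) + 2 \<le> (k + 1) + v (d (k + 1) s)"
    and O1: "\<And>r. odd r \<Longrightarrow> r < 2 ^ (k + 1) \<Longrightarrow> v (d (k + 1) r) + 1 = (k + 1) + v (d (k + 1) (r - 1))"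
    and r: "even r" "r < 2 ^ (k + 1)"
  shows "v (d (k + 2) (2 ^ (k + 1) + r)) = r + v (d (k + 1) r)"
proof -
  define M :: nat where "M = 2 ^ (k + 1)"
  define h :: nat where "h = 2 ^ k"
  have Mh: "M = 2 * h" unfolding M_def h_def by simp
  define a where "a = (\<lambda>t. coeff (A M) t)"
  define T where "T = (\<lambda>s. 2 ^ s * d (k + 1) s * a (M + r - s))"
  have cv: "d (k + 2) (M + r) = (\<Sum>s\<le>M + r. T s)"
    using d_conv[of "k + 1" "M + r"] unfolding T_def a_def M_def by simp
  have dr: "d (k + 1) r \<noteq> 0" using d_ne r by auto
  have aM: "odd (a M)" unfolding a_def by (rule A_top)
  then have aM0: "a M \<noteq> 0" by auto
  define e where "e = r + v (d (k + 1) r)"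
  have Tr: "T r = 2 ^ r * d (k + 1) r * a M" unfolding T_def by simp
  have Trne: "T r \<noteq> 0" unfolding Tr using dr aM0 by simp
  have vTr: "v (T r) = e"
  proof -
    have "v (T r) = v (2 ^ r * d (k + 1) r) + v (a M)" unfolding Tr using dr aM0 by (simp add: v_mult)
    also have "\<dots> = r + v (d (k + 1) r)" using dr by (simp add: v_mult v_pow2 v_odd aM)
    finally show ?thesis unfolding e_def .
  qed
  have rest: "2 ^ Suc e dvd T s" if s: "s \<le> M + r" "s \<noteq> r" for s
  proof (cases "s < r")
    case True
    then have "a (M + r - s) = 0" unfolding a_def by (intro A_high) simp
    then show ?thesis unfolding T_def by simp
  next
    case False
    then have rs: "r < s" using s by simp
    show ?thesis
    proof (cases "M \<le> s")
      case True
      have "d (k + 1) s = 0" unfolding d_def using True M_def by (intro G_high) auto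
      then show ?thesis unfolding T_def by simp
    next
      case False
      then have sM: "s < M" by simp
      show ?thesis
      proof (cases "odd s")
        case True
        have o: "v (d (k + 1) s) + 1 = (k + 1) + v (d (k + 1) (s - 1))"
          using O1 True sM M_def by auto
        have g: "v (d (k + 1) r) + 1 \<le> v (d (k + 1) s)"
        proof (cases "s - 1 = r")
          case True then show ?thesis using o k1 by simp
        next
          case False
          then have "r < s - 1" using rs by simp
          moreover have "even (s - 1)" using \<open>odd s\<close> by simp
          ultimately have "v (d (k + 1) r) + 2 \<le> (k + 1) + v (d (k + 1) (s - 1))"
            using I1 r sM M_def by simp
          then show ?thesis using o by linarith
        qed
        have "2 ^ (s + v (d (k + 1) s) + 0) dvd T s"
          unfolding T_def by (rule pow_dvd_mult3[OF v_dvd]) simp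
        moreover have "Suc e \<le> s + v (d (k + 1) s) + 0" unfolding e_def using g rs by linarith
        ultimately show ?thesis by (rule pow_dvd_mono[rotated])
      next
        case False
        then obtain \<tau> where \<tau>: "s = r + 2 * \<tau>" using r(1) rs
          by (metis add_diff_inverse_nat dvd_diff_nat evenE less_imp_le_nat not_less)
        have \<tau>1: "1 \<le> \<tau>" "\<tau> < h" using \<tau> rs sM Mh by auto
        have idx: "M + r - s = 2 * (h - \<tau>)" using \<tau> Mh \<tau>1 by simp
        have aw0: "2 ^ (k - v (int (h - \<tau>))) dvd a (2 * (h - \<tau>))"
          unfolding a_def M_def h_def by (rule A_low) (use \<tau>1 h_def in auto)
        have aw: "2 ^ (k - v (int (h - \<tau>))) dvd a (M + r - s)"
          unfolding idx by (rule aw0)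
        have vv: "v (int (h - \<tau>)) = v (int \<tau>)" unfolding h_def using \<tau>1 h_def by (intro v_two_pow_minus) auto
        have vt1: "v (int \<tau>) < \<tau>" using \<tau>1 by (intro v_lt_self) auto
        have vt2: "v (int \<tau>) < k" using \<tau>1 h_def by (intro v_lt) auto
        have i: "v (d (k + 1) r) + 2 \<le> (k + 1) + v (d (k + 1) s)"
          using I1 r rs sM M_def False by simp
        have "2 ^ (s + v (d (k + 1) s) + (k - v (int \<tau>))) dvd T s"
          unfolding T_def by (rule pow_dvd_mult3[OF v_dvd aw[unfolded vv]])
        moreover have "Suc e \<le> s + v (d (k + 1) s) + (k - v (int \<tau>))"
          unfolding e_def using i vt1 vt2 \<tau> by linarith
        ultimately show ?thesis by (rule pow_dvd_mono[rotated])
      qed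
    qed
  qed
  have R: "2 ^ Suc (v (T r)) dvd (\<Sum>s\<le>M + r. T s) - T r"
    unfolding vTr
  proof (rule sum_rest_dvd)
    fix s assume "s \<in> {..M + r}" "s \<noteq> r"
    then show "2 ^ Suc e dvd T s" by (intro rest) auto
  qed auto
  have "d (k + 2) (M + r) = T r + ((\<Sum>s\<le>M + r. T s) - T r)" unfolding cv by simp
  then have "v (d (k + 2) (M + r)) = v (T r)" using v_add[OF Trne R] by simp
  then show ?thesis using vTr e_def M_def by simp
qed

lemma d1: "d 1 0 = 1" "d 1 1 = 1"
  by (simp_all add: d_def numeral_2_eq_2 P_Suc)

lemma d2: "d 2 2 = 11"
  by (simp add: d_def eval_nat_numeral P_Suc)

lemma v11: "v 11 = 0" by (rule v_odd) simp

lemma E_le: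
  assumes E: "\<And>u. 1 \<le> u \<Longrightarrow> u \<le> 2 ^ k \<Longrightarrow> \<not> 2 ^ (k + 1) dvd d (k + 2) (2 * u)"
    and r: "even r" "r \<le> 2 ^ (k + 1)"
  shows "v (d (k + 2) r) \<le> k"
proof (cases "r = 0")
  case True then show ?thesis by simp
next
  case False
  obtain u where u: "r = 2 * u" using r(1) by auto
  have u1: "1 \<le> u" "u \<le> 2 ^ k" using u False r(2) by auto
  have "r < 2 ^ (k + 2)" using r(2) by (simp add: order_le_less_trans)
  then have ne: "d (k + 2) r \<noteq> 0" by (rule d_ne)
  show ?thesis
  proof (rule ccontr)
    assume "\<not> v (d (k + 2) r) \<le> k"
    then have "2 ^ (k + 1) dvd d (k + 2) r" using ne by (intro dvd_le_v) auto
    then show False using E[OF u1] u by simp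
  qed
qed

lemma I_step:
  assumes E: "\<And>u. 1 \<le> u \<Longrightarrow> u \<le> 2 ^ k \<Longrightarrow> \<not> 2 ^ (k + 1) dvd d (k + 2) (2 * u)"
    and T: "\<And>r. even r \<Longrightarrow> r < 2 ^ (k + 1) \<Longrightarrow> v (d (k + 2) (2 ^ (k + 1) + r)) = r + v (d (k + 1) r)"
    and I1: "\<And>r s. even r \<Longrightarrow> even s \<Longrightarrow> r < s \<Longrightarrow> s < 2 ^ (k + 1) \<Longrightarrow> v (d (k + 1) r) + 2 \<le> (k + 1) + v (d (k + 1) s)"
    and rs: "even r" "even s" "r < s" "s < 2 ^ (k + 2)"
  shows "v (d (k + 2) r) + 2 \<le> (k + 2) + v (d (k + 2) s)"
proof (cases "r \<le> 2 ^ (k + 1)")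
  case True
  then have "v (d (k + 2) r) \<le> k" using E rs(1) by (rule E_le[rotated 2])
  then show ?thesis by simp
next
  case False
  define M :: nat where "M = 2 ^ (k + 1)"
  have Me: "even M" unfolding M_def by simp
  have s2: "s < 2 * M" using rs(4) unfolding M_def by simp
  define r' where "r' = r - M"
  define s' where "s' = s - M"
  have rr: "r = M + r'" "s = M + s'" using False rs(3) unfolding r'_def s'_def M_def by auto
  have ev: "even r'" "even s'" using rs Me rr by auto
  have lt: "r' < s'" "s' < M" using rr rs(3) s2 by auto
  have "v (d (k + 2) r) = r' + v (d (k + 1) r')" using T[of r'] ev lt rr unfolding M_def by simp
  moreover have "v (d (k + 2) s) = s' + v (d (k + 1) s')" using T[of s'] ev lt rr unfolding M_def by simp
  moreover have "v (d (k + 1) r') + 2 \<le> (k + 1) + v (d (k + 1) s')" using I1 ev lt unfolding M_def by simp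
  ultimately show ?thesis using lt by linarith
qed

lemma OT_step:
  assumes E: "\<And>u. 1 \<le> u \<Longrightarrow> u \<le> 2 ^ k \<Longrightarrow> \<not> 2 ^ (k + 1) dvd d (k + 2) (2 * u)"
    and T: "\<And>r. even r \<Longrightarrow> r < 2 ^ (k + 1) \<Longrightarrow> v (d (k + 2) (2 ^ (k + 1) + r)) = r + v (d (k + 1) r)"
    and Tg1: "\<And>r. 1 \<le> r \<Longrightarrow> r < 2 ^ (k + 1) \<Longrightarrow> v (d (k + 1) r) < (k + 1) + v (d (k + 1) (r - 1))"
    and O1: "\<And>r. odd r \<Longrightarrow> r < 2 ^ (k + 1) \<Longrightarrow> v (d (k + 1) r) + 1 = (k + 1) + v (d (k + 1) (r - 1))"
  shows "1 \<le> r \<Longrightarrow> r < 2 ^ (k + 2) \<Longrightarrow> (odd r \<longrightarrow> v (d (k + 2) r) + 1 = (k + 2) + v (d (k + 2) (r - 1)))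
     \<and> v (d (k + 2) r) < (k + 2) + v (d (k + 2) (r - 1))"
proof (induction r rule: less_induct)
  case (less r)
  define n where "n = k + 2"
  define N :: nat where "N = 2 ^ n"
  define f where "f = (\<lambda>i. v (d n i))"
  have Tgs: "f i < n + f (i - 1)" if "1 \<le> i" "i < r" for i
    using less.IH[of i] that less.prems unfolding f_def n_def by auto
  show ?case
  proof (cases "odd r")
    case True
    then obtain r' where r': "r = Suc r'" "even r'" by (metis even_Suc oddE odd_Suc_minus_one)
    have rN: "Suc r' < N" using less.prems r' unfolding N_def n_def by simp
    have dn: "d n = (\<lambda>t. coeff (G N) t)" unfolding d_def N_def by (rule ext) simp
    define S where "S = (\<Sum>t<r'. d n t * int (N - t choose (Suc r' - t)) * (- int N) ^ (Suc r' - t))"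
    define X where "X = int N * (int N - int r' - 1) * d n r'"
    have R: "2 * d n (Suc r') = X - S"
      unfolding X_def S_def dn using refl_odd[OF r'(2) rN] by simp
    have dne: "d n r' \<noteq> 0" using rN unfolding N_def by (intro d_ne) simp
    have Nint: "int N = 2 ^ n" unfolding N_def by simp
    have Neven: "even N" unfolding N_def n_def by simp
    have oddf: "odd (int N - int r' - 1)"
    proof -
      obtain a where a: "N = 2 * a" using Neven by auto
      obtain b where b: "r' = 2 * b" using r'(2) by auto
      have "int N - int r' - 1 = 2 * (int a - int b - 1) + 1" using a b by simp
      then show ?thesis by presburger
    qed
    then have oddne: "int N - int r' - 1 \<noteq> 0" by (metis even_zero)
    have vX: "v X = n + f r'"
    proof -
      have "v X = v (int N) + v (int N - int r' - 1) + v (d n r')"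
      proof -
        have Nne: "int N \<noteq> 0" unfolding N_def by simp
        have "v X = v (int N * (int N - int r' - 1)) + v (d n r')"
          unfolding X_def using dne oddne Nne by (intro v_mult) auto
        also have "v (int N * (int N - int r' - 1)) = v (int N) + v (int N - int r' - 1)"
          using oddne Nne by (intro v_mult) auto
        finally show ?thesis .
      qed
      moreover have "v (int N) = n" unfolding Nint by (rule v_pow2)
      moreover have "v (int N - int r' - 1) = 0" by (rule v_odd[OF oddf])
      ultimately show ?thesis unfolding f_def by simp
    qed
    have Xne: "X \<noteq> 0" unfolding X_def using dne oddne by (simp add: N_def)
    have dS: "2 ^ Suc (v X) dvd S"
      unfolding S_def
    proof (rule dvd_sum)
      fix t assume "t \<in> {..<r'}"
      then have tr: "t < r'" by simp
      have ch: "f r' + 1 \<le> (r' - t) * n + f t"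
        by (rule chain[of t r' f n]) (use Tgs r' tr in auto)
      have p1: "2 ^ f t dvd d n t" unfolding f_def by (rule v_dvd)
      have p2: "2 ^ (n * (Suc r' - t)) dvd (- int N) ^ (Suc r' - t)"
      proof -
        have "(- int N) ^ (Suc r' - t) = (-1) ^ (Suc r' - t) * 2 ^ (n * (Suc r' - t))"
          unfolding Nint by (simp add: power_mult power_mult_distrib[symmetric])
        then show ?thesis by simp
      qed
      have "2 ^ f t * 2 ^ (n * (Suc r' - t)) dvd (d n t * int (N - t choose (Suc r' - t))) * (- int N) ^ (Suc r' - t)"
        by (rule mult_dvd_mono[OF _ p2]) (use p1 in simp)
      then have "2 ^ (f t + n * (Suc r' - t)) dvd d n t * int (N - t choose (Suc r' - t)) * (- int N) ^ (Suc r' - t)"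
        by (simp add: power_add)
      moreover have "Suc (v X) \<le> f t + n * (Suc r' - t)"
      proof -
        have "n * (Suc r' - t) = n + (r' - t) * n" using tr by (simp add: Suc_diff_le mult.commute)
        then show ?thesis using ch vX by linarith
      qed
      ultimately show "2 ^ Suc (v X) dvd d n t * int (N - t choose (Suc r' - t)) * (- int N) ^ (Suc r' - t)"
        by (rule pow_dvd_mono[rotated])
    qed
    then have dS': "2 ^ Suc (v X) dvd - S" by simp
    have "v (2 * d n (Suc r')) = v X"
      unfolding R using v_add[OF Xne dS'] by simp
    moreover have "v (2 * d n (Suc r')) = 1 + f (Suc r')"
    proof -
      have "d n (Suc r') \<noteq> 0" using rN unfolding N_def by (intro d_ne) simp
      then show ?thesis unfolding f_def using v_pow2[of 1] by (simp add: v_mult)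
    qed
    ultimately have "f r + 1 = n + f (r - 1)" using vX r' by simp
    then show ?thesis unfolding f_def n_def by simp
  next
    case False
    define M :: nat where "M = 2 ^ (k + 1)"
    show ?thesis
    proof (cases "r \<le> M")
      case True
      have "v (d (k + 2) r) \<le> k" by (rule E_le[OF E]) (use False True M_def in auto)
      then show ?thesis using False by simp
    next
      case c2: False
      define r' where "r' = r - M"
      have Me: "even M" unfolding M_def by simp
      have rr: "r = M + r'" using c2 unfolding r'_def by simp
      have ev: "even r'" using False Me rr by auto
      have "0 < r'" using c2 rr by simp
      then have r'2: "2 \<le> r'" using ev by presburger
      have r'M: "r' < M" using less.prems rr unfolding M_def by simp
      have e1: "v (d (k + 2) r) = r' + v (d (k + 1) r')"
        using T[of r'] ev r'M rr unfolding M_def by simp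
      have e2: "v (d (k + 2) (r - 2)) = (r' - 2) + v (d (k + 1) (r' - 2))"
      proof -
        have "r - 2 = M + (r' - 2)" using rr r'2 by simp
        then show ?thesis using T[of "r' - 2"] ev r'M r'2 unfolding M_def by simp
      qed
      have e3: "v (d (k + 2) (r - 1)) + 1 = (k + 2) + v (d (k + 2) (r - 2))"
      proof -
        have "odd (r - 1)" using False rr r'2 by simp
        moreover have "r - 1 - 1 = r - 2" by simp
        ultimately show ?thesis using less.IH[of "r - 1"] less.prems rr r'2 by simp
      qed
      have e4: "v (d (k + 1) r') < (k + 1) + v (d (k + 1) (r' - 1))"
        using Tg1[of r'] r'2 r'M unfolding M_def by simp
      have e5: "v (d (k + 1) (r' - 1)) + 1 = (k + 1) + v (d (k + 1) (r' - 2))"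
      proof -
        have "odd (r' - 1)" using ev r'2 by simp
        moreover have "r' - 1 - 1 = r' - 2" by simp
        ultimately show ?thesis using O1[of "r' - 1"] r'M unfolding M_def by simp
      qed
      have "v (d (k + 2) r) < (k + 2) + v (d (k + 2) (r - 1))"
        using e1 e2 e3 e4 e5 r'2 by linarith
      then show ?thesis using False by simp
    qed
  qed
qed

definition Ep where "Ep k \<longleftrightarrow> (\<forall>u. 1 \<le> u \<and> u \<le> 2 ^ k \<longrightarrow> 2 ^ (k - v (int u)) dvd d (k + 2) (2 * u) \<and> \<not> 2 ^ (k + 1) dvd d (k + 2) (2 * u))"
definition Tp where "Tp k \<longleftrightarrow> (\<forall>r. even r \<and> r < 2 ^ (k + 1) \<longrightarrow> v (d (k + 2) (2 ^ (k + 1) + r)) = r + v (d (k + 1) r))"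
definition Ip where "Ip n \<longleftrightarrow> (\<forall>r s. even r \<and> even s \<and> r < s \<and> s < 2 ^ n \<longrightarrow> v (d n r) + 2 \<le> n + v (d n s))"
definition Op where "Op n \<longleftrightarrow> (\<forall>r. odd r \<and> r < 2 ^ n \<longrightarrow> v (d n r) + 1 = n + v (d n (r - 1)))"
definition Tg where "Tg n \<longleftrightarrow> (\<forall>r. 1 \<le> r \<and> r < 2 ^ n \<longrightarrow> v (d n r) < n + v (d n (r - 1)))"

lemma d1': "d (Suc 0) (Suc 0) = 1" "d (Suc 0) 0 = 1" using d1 by simp_all
lemma d2': "d (Suc (Suc 0)) 2 = 11" by (simp add: d_def eval_nat_numeral P_Suc)

lemma base1: "Ip 1" "Op 1" "Tg 1"
proof -
  show "Ip 1" unfolding Ip_def by auto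
  have r1: "r = 1" if "1 \<le> r" "r < 2 ^ 1" for r :: nat using that by simp
  show "Op 1" unfolding Op_def
  proof (intro allI impI)
    fix r :: nat assume "odd r \<and> r < 2 ^ 1"
    then have "r = 1" by (cases r) auto
    then show "v (d 1 r) + 1 = 1 + v (d 1 (r - 1))" by (simp add: d1 d1')
  qed
  show "Tg 1" unfolding Tg_def
  proof (intro allI impI)
    fix r :: nat assume "1 \<le> r \<and> r < 2 ^ 1"
    then have "r = 1" by simp
    then show "v (d 1 r) < 1 + v (d 1 (r - 1))" by (simp add: d1 d1')
  qed
qed

lemma base2: "Ep 0" "Tp 0"
proof -
  show "Ep 0" unfolding Ep_def
  proof (intro allI impI)
    fix u :: nat assume "1 \<le> u \<and> u \<le> 2 ^ 0"
    then have "u = 1" by simp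
    then show "2 ^ (0 - v (int u)) dvd d (0 + 2) (2 * u) \<and> \<not> 2 ^ (0 + 1) dvd d (0 + 2) (2 * u)"
      by (simp add: d2 d2')
  qed
  show "Tp 0" unfolding Tp_def
  proof (intro allI impI)
    fix r :: nat assume "even r \<and> r < 2 ^ (0 + 1)"
    then have "r = 0" by (cases r) auto
    then show "v (d (0 + 2) (2 ^ (0 + 1) + r)) = r + v (d (0 + 1) r)"
      by (simp add: d2 d2' d1 d1' v11)
  qed
qed

lemma step:
  assumes "Ip (k + 1)" "Op (k + 1)" "Tg (k + 1)" "Ep k" "Tp k"
  shows "Ip (k + 2) \<and> Op (k + 2) \<and> Tg (k + 2)"
proof -
  have E: "\<And>u. 1 \<le> u \<Longrightarrow> u \<le> 2 ^ k \<Longrightarrow> \<not> 2 ^ (k + 1) dvd d (k + 2) (2 * u)"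
    using assms(4) unfolding Ep_def by blast
  have T: "\<And>r. even r \<Longrightarrow> r < 2 ^ (k + 1) \<Longrightarrow> v (d (k + 2) (2 ^ (k + 1) + r)) = r + v (d (k + 1) r)"
    using assms(5) unfolding Tp_def by blast
  have I1: "\<And>r s. even r \<Longrightarrow> even s \<Longrightarrow> r < s \<Longrightarrow> s < 2 ^ (k + 1) \<Longrightarrow> v (d (k + 1) r) + 2 \<le> (k + 1) + v (d (k + 1) s)"
    using assms(1) unfolding Ip_def by blast
  have O1: "\<And>r. odd r \<Longrightarrow> r < 2 ^ (k + 1) \<Longrightarrow> v (d (k + 1) r) + 1 = (k + 1) + v (d (k + 1) (r - 1))"
    using assms(2) unfolding Op_def by blast
  have Tg1: "\<And>r. 1 \<le> r \<Longrightarrow> r < 2 ^ (k + 1) \<Longrightarrow> v (d (k + 1) r) < (k + 1) + v (d (k + 1) (r - 1))"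
    using assms(3) unfolding Tg_def by blast
  have "Ip (k + 2)" unfolding Ip_def using I_step[OF E T I1] by blast
  moreover have "Op (k + 2)" unfolding Op_def
  proof (intro allI impI)
    fix r :: nat assume r: "odd r \<and> r < 2 ^ (k + 2)"
    then have "1 \<le> r" by (cases r) auto
    then show "v (d (k + 2) r) + 1 = k + 2 + v (d (k + 2) (r - 1))"
      using OT_step[OF E T Tg1 O1, of r] r by blast
  qed
  moreover have "Tg (k + 2)" unfolding Tg_def
  proof (intro allI impI)
    fix r :: nat assume r: "1 \<le> r \<and> r < 2 ^ (k + 2)"
    then show "v (d (k + 2) r) < k + 2 + v (d (k + 2) (r - 1))"
      using OT_step[OF E T Tg1 O1, of r] by blast
  qed
  ultimately show ?thesis by blast
qed

lemma all_levels: "Ep k \<and> Tp k \<and> Ip (k + 2) \<and> Op (k + 2) \<and> Tg (k + 2)"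
proof (induction k)
  case 0
  then show ?case using base1 base2 step[of 0] by simp
next
  case (Suc k)
  have E: "Ep (Suc k)" unfolding Ep_def
  proof (intro allI impI)
    fix u :: nat assume u: "1 \<le> u \<and> u \<le> 2 ^ Suc k"
    have IH: "2 ^ (Suc k - 1 - v (int u)) dvd d (Suc k + 1) (2 * u)" if "1 \<le> u" "u \<le> 2 ^ (Suc k - 1)" for u
      using Suc.IH that unfolding Ep_def by simp
    show "2 ^ (Suc k - v (int u)) dvd d (Suc k + 2) (2 * u) \<and> \<not> 2 ^ (Suc k + 1) dvd d (Suc k + 2) (2 * u)"
      by (rule E_step) (use IH u in auto)
  qed
  have T: "Tp (Suc k)" unfolding Tp_def
  proof (intro allI impI)
    fix r :: nat assume r: "even r \<and> r < 2 ^ (Suc k + 1)"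
    have I1: "v (d (Suc k + 1) r) + 2 \<le> (Suc k + 1) + v (d (Suc k + 1) s)"
      if "even r" "even s" "r < s" "s < 2 ^ (Suc k + 1)" for r s
      using Suc.IH that unfolding Ip_def by simp
    have O1: "v (d (Suc k + 1) r) + 1 = (Suc k + 1) + v (d (Suc k + 1) (r - 1))"
      if "odd r" "r < 2 ^ (Suc k + 1)" for r
      using Suc.IH that unfolding Op_def by simp
    show "v (d (Suc k + 2) (2 ^ (Suc k + 1) + r)) = r + v (d (Suc k + 1) r)"
      by (rule T_step) (use I1 O1 r in auto)
  qed
  have "Ip (Suc k + 2) \<and> Op (Suc k + 2) \<and> Tg (Suc k + 2)"
    using Suc.IH E T by (intro step) simp_all
  with E T show ?case by simp
qed

lemma Tg_all: "1 \<le> n \<Longrightarrow> Tg n"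
proof -
  assume "1 \<le> n"
  then consider "n = 1" | k where "n = k + 2" by (metis add.commute add_2_eq_Suc' le_iff_add One_nat_def nat_induct_at_least not0_implies_Suc plus_1_eq_Suc)
  then show ?thesis using base1 all_levels by cases auto
qed

lemma mult_nat_v: "multiplicity (2::nat) x = v (int x)"
proof (cases "x = 0")
  case True then show ?thesis by (simp add: v_def)
next
  case False
  show ?thesis
  proof (rule multiplicity_eqI)
    have "2 ^ v (int x) dvd int x" by (rule v_dvd)
    then show "(2::nat) ^ v (int x) dvd x" by (metis of_nat_dvd_iff of_nat_numeral of_nat_power)
    show "\<not> (2::nat) ^ Suc (v (int x)) dvd x"
    proof
      assume "(2::nat) ^ Suc (v (int x)) dvd x"
      then have "(2::int) ^ Suc (v (int x)) dvd int x" by (metis of_nat_dvd_iff of_nat_numeral of_nat_power)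
      then show False using v_not_dvd[of "int x"] False by simp
    qed
  qed
qed

theorem theorem1p2:
  fixes n k :: nat
  assumes "n > 0" and "k > 0" and "k \<le> 2 ^ n"
  shows "multiplicity (2::nat) (stirling (2 ^ n + 1) (k + 1)) = multiplicity (2::nat) (stirling (2 ^ n) k)"
proof (cases "k = 2 ^ n")
  case True then show ?thesis by simp
next
  case False
  define N :: nat where "N = 2 ^ n"
  have kN: "k < N" using False assms(3) unfolding N_def by simp
  define r where "r = N - k"
  have r: "1 \<le> r" "r < N" using kN assms(2) unfolding r_def by auto
  have h0: "int (stirling N k) = d n r"
    unfolding d_def N_def[symmetric] using G_stirling[of r N] r kN unfolding r_def by simp
  have h1: "int (stirling N (k + 1)) = d n (r - 1)"
    unfolding d_def N_def[symmetric] using G_stirling[of "r - 1" N] r kN unfolding r_def by simp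
  have rec: "stirling (N + 1) (k + 1) = N * stirling N (k + 1) + stirling N k" by simp
  have hX: "int (stirling (N + 1) (k + 1)) = d n r + int N * d n (r - 1)"
    unfolding rec using h0 h1 by simp
  have tg: "v (d n r) < n + v (d n (r - 1))"
    using Tg_all[of n] assms(1) r unfolding Tg_def N_def by auto
  have dne: "d n r \<noteq> 0" using r unfolding N_def by (intro d_ne) auto
  have dne1: "d n (r - 1) \<noteq> 0" using r unfolding N_def by (intro d_ne) auto
  have Nne: "int N \<noteq> 0" unfolding N_def by simp
  have "v (int N * d n (r - 1)) = n + v (d n (r - 1))"
    using Nne dne1 by (simp add: v_mult N_def v_pow2)
  then have "2 ^ Suc (v (d n r)) dvd int N * d n (r - 1)"
    using tg Nne dne1 by (intro dvd_le_v) auto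
  then have "v (d n r + int N * d n (r - 1)) = v (d n r)" by (rule v_add[OF dne])
  then have "v (int (stirling (N + 1) (k + 1))) = v (int (stirling N k))" unfolding hX h0 .
  then show ?thesis unfolding N_def mult_nat_v .
qed

end
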